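(* Let $N\ge 2$ be an integer, let $\gamma>0$, $\upsilon\in(0,1]$, $P_b>0$, $h>0$, $T>0$, and let $p_1>p_2>\cdots>p_N>0$ with $p_1\le1$. Consider Problem P3: minimize $\sum_{k=1}^N \gamma p_k f_k^2$ over $(f_1,\dots,f_N,y_1,\dots,y_N)$ subject to $\sum_{k=1}^N \gamma f_k^2 \le \upsilon P_b h \sum_{k=1}^N y_k$, $\sum_{k=1}^N y_k\le T$, and $f_k>0$, $\frac{1}{f_k}-y_k\le 0$ for all $k$, and let $\bar E^*_{\mathrm{loc}}$ denote its optimal value (the minimum average energy consumption). Define $a=\frac{\gamma N^3}{\upsilon T^3}$ and $a'=\frac{\gamma}{\upsilon T^3}\left(\sum_{k=1}^N p_k^{1/3}\right)^2\left(\sum_{k=1}^N p_k^{-2/3}\right)$. Then: (1) if $a< P_bh<a'$, $$\bar E^*_{\mathrm{loc}}=\frac{\gamma}{T^2}\left[\sum_{k=1}^N(p_k+\lambda)^{1/3}\right]^2\left[\sum_{k=1}^N p_k(p_k+\lambda)^{-2/3}\right],$$ where $\lambda>0$ satisfies $\left[\sum_{k=1}^N (p_k+\lambda)^{1/3}\right]^2\left[\sum_{k=1}^N (p_k+\lambda)^{-2/3}\right]=\frac{\upsilon P_bhT^3}{\gamma}$; if $P_bh=a$, $\bar E^*_{\mathrm{loc}}=\frac{\gamma N^2}{T^2}\sum_{k=1}^N p_k$; moreover, on $a\le P_bh<a'$, $\bar E^*_{\mathrm{loc}}$ is a monotone decreasing function of $P_bh$ and $$\frac{\gamma}{T^2}\left(\sum_{k=1}^N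 p_k^{1/3}\right)^3<\bar E^*_{\mathrm{loc}}\le\frac{\gamma N^2}{T^2}\sum_{k=1}^N p_k;$$ (2) if $P_bh\ge a'$, $\bar E^*_{\mathrm{loc}}=\frac{\gamma}{T^2}\left(\sum_{k=1}^N p_k^{1/3}\right)^3$, which is independent of $P_bh$.
   Context: $f_k$ is the CPU frequency of the $k$-th cycle, $p_k$ the probability that the $k$-th cycle is executed, $\gamma f^2$ the energy per cycle at frequency $f$, $\upsilon P_b h$ the harvested power and $T$ the deadline. *)

theory Defs
  imports Complex_Main
begin

text \<open>Problem P3. Decision variables f, y indexed by 1..N. The problem data enter
  only through the harvested-power parameter c = P_b * h (together with gamma, upsilon, T).\<close>

definition P3_feasible ::
  "real \<Rightarrow> real \<Rightarrow> real \<Rightarrow> real \<Rightarrow> nat \<Rightarrow> (nat \<Rightarrow> real) \<Rightarrow> (nat \<Rightarrow> real) \<Rightarrow> bool" where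
  "P3_feasible \<gamma> \<upsilon> c T N f y \<longleftrightarrow>
     (\<Sum>k=1..N. \<gamma> * (f k)^2) \<le> \<upsilon> * c * (\<Sum>k=1..N. y k) \<and>
     (\<Sum>k=1..N. y k) \<le> T \<and>
     (\<forall>k\<in>{1..N}. f k > 0 \<and> 1 / f k - y k \<le> 0)"

definition P3_objective :: "real \<Rightarrow> nat \<Rightarrow> (nat \<Rightarrow> real) \<Rightarrow> (nat \<Rightarrow> real) \<Rightarrow> real" where
  "P3_objective \<gamma> N p f = (\<Sum>k=1..N. \<gamma> * p k * (f k)^2)"

definition P3_value ::
  "real \<Rightarrow> real \<Rightarrow> real \<Rightarrow> real \<Rightarrow> nat \<Rightarrow> (nat \<Rightarrow> real) \<Rightarrow> real" where
  "P3_value \<gamma> \<upsilon> c T N p =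
     Inf {P3_objective \<gamma> N p f | f y. P3_feasible \<gamma> \<upsilon> c T N f y}"

end

theory Submission imports Defs begin

lemma cube_amgm:
  fixes x r m :: real assumes "x>0" "r>0" "m>0"
  shows "3*m^2*r \<le> r^3*x^2 + 2*m^3/x"
proof -
  have e: "r^3*x^2 + 2*m^3/x - 3*m^2*r = (r*x-m)^2*(r*x+2*m)/x"
    using assms by (simp add: field_simps power2_eq_square power3_eq_cube)
  have "(r*x-m)^2*(r*x+2*m)/x \<ge> 0" using assms by simp
  then show ?thesis using e by linarith
qed

lemma cube_eq:
  fixes x m :: real assumes "x>0" "m>0" "x^2 + 2*m^3/x - 3*m^2 = 0"
  shows "x = m"
proof -
  have e: "x^2 + 2*m^3/x - 3*m^2 = (x-m)^2*(x+2*m)/x"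
    using assms by (simp add: field_simps power2_eq_square power3_eq_cube)
  then have "(x-m)^2*(x+2*m) = 0" using assms by simp
  then show ?thesis using assms by simp
qed

lemma holder3:
  fixes r f :: "nat \<Rightarrow> real" and I :: "nat set"
  assumes "finite I" "I \<noteq> {}" "\<And>k. k\<in>I \<Longrightarrow> r k > 0" "\<And>k. k\<in>I \<Longrightarrow> f k > 0"
    "(\<Sum>k\<in>I. 1 / f k) \<le> T" "T > 0"
  shows "(\<Sum>k\<in>I. r k)^3 / T^2 \<le> (\<Sum>k\<in>I. r k^3 * f k^2)"
proof -
  define S where "S = (\<Sum>k\<in>I. r k)"
  have S: "S > 0" unfolding S_def using assms by (simp add: sum_pos)
  define m where "m = S / T"
  have m: "m > 0" using S assms by (simp add: m_def)
  have "(\<Sum>k\<in>I. 3*m^2*r k) \<le> (\<Sum>k\<in>I. r k^3 * f k^2 + 2*m^3/f k)"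
    by (rule sum_mono) (use cube_amgm assms m in auto)
  also have "\<dots> = (\<Sum>k\<in>I. r k^3 * f k^2) + 2*m^3 * (\<Sum>k\<in>I. 1/f k)"
    by (simp add: sum.distrib sum_distrib_left)
  also have "\<dots> \<le> (\<Sum>k\<in>I. r k^3 * f k^2) + 2*m^3 * T"
    using assms m by simp
  finally have "3*m^2*S - 2*m^3*T \<le> (\<Sum>k\<in>I. r k^3 * f k^2)"
    by (simp add: S_def sum_distrib_left)
  moreover have "3*m^2*S - 2*m^3*T = S^3/T^2"
    using assms by (simp add: m_def field_simps power2_eq_square power3_eq_cube)
  ultimately show ?thesis by (simp add: S_def)
qed

lemma powr_cube: "(q::real) > 0 \<Longrightarrow> (q powr (1/3))^3 = q"
  by (simp add: powr_power flip: powr_powr)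

lemma powr_m23: "(q::real) > 0 \<Longrightarrow> q powr (-2/3) = 1 / (q powr (1/3))^2"
  by (simp add: powr_power powr_minus_divide)


definition SS :: "nat \<Rightarrow> (nat \<Rightarrow> real) \<Rightarrow> real \<Rightarrow> real" where "SS N p l = (\<Sum>k=1..N. ((p k + l) powr (1/3)::real))"
definition RR :: "nat \<Rightarrow> (nat \<Rightarrow> real) \<Rightarrow> real \<Rightarrow> real" where "RR N p l = (\<Sum>k=1..N. ((p k + l) powr (-2/3)::real))"
definition QQ :: "nat \<Rightarrow> (nat \<Rightarrow> real) \<Rightarrow> real \<Rightarrow> real" where "QQ N p l = (\<Sum>k=1..N. (p k * (p k + l) powr (-2/3)::real))"

lemma ppl: "\<forall>k\<in>{1..N}. p k > (0::real) \<Longrightarrow> l \<ge> 0 \<Longrightarrow> k \<in> {1..N} \<Longrightarrow> p k + l > 0"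
  by (metis add_pos_nonneg)

lemma SS_pos: assumes N: "N \<ge> 1" and pp: "\<forall>k\<in>{1..N}. p k > 0" and l: "l \<ge> 0" shows "SS N p l > 0"
  unfolding SS_def
proof (rule sum_pos)
  fix i assume "i \<in> {1..N}"
  then have "p i + l > 0" using ppl[OF pp l] by blast
  then show "(p i + l) powr (1/3) > 0" by simp
qed (use N in auto)

lemma LB_feas:
  assumes pp: "\<forall>k\<in>{1..N}. p k > (0::real)" and N: "N \<ge> 1" and g: "\<gamma> > 0"
    and uc: "\<upsilon> * c \<ge> 0" and T: "T > 0" and l: "l \<ge> 0"
    and F: "P3_feasible \<gamma> \<upsilon> c T N f y"
  shows "\<gamma> * SS N p l ^ 3 / T^2 - l * \<upsilon> * c * T \<le> P3_objective \<gamma> N p f"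
proof -
  from F have h1: "(\<Sum>k=1..N. \<gamma> * (f k)^2) \<le> \<upsilon> * c * (\<Sum>k=1..N. y k)"
    and h2: "(\<Sum>k=1..N. y k) \<le> T" and h3: "\<forall>k\<in>{1..N}. f k > 0 \<and> 1 / f k - y k \<le> 0"
    unfolding P3_feasible_def by auto
  have "(\<Sum>k=1..N. 1 / f k) \<le> (\<Sum>k=1..N. y k)" by (rule sum_mono) (use h3 in auto)
  with h2 have s1: "(\<Sum>k=1..N. 1 / f k) \<le> T" by linarith
  have hol: "SS N p l ^ 3 / T^2 \<le> (\<Sum>k=1..N. ((p k + l) powr (1/3))^3 * f k^2)"
    unfolding SS_def
  proof (rule holder3)
    fix k assume k: "k \<in> {1..N}"
    show "(p k + l) powr (1/3) > 0" using ppl[OF pp l k] by simp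
    show "f k > 0" using h3 k by auto
  qed (use N s1 T in auto)
  have "(\<Sum>k=1..N. ((p k + l) powr (1/3))^3 * f k^2) = (\<Sum>k=1..N. (p k + l) * f k^2)"
    by (rule sum.cong) (use ppl[OF pp l] powr_cube in presburger)+
  with hol have hol2: "SS N p l ^ 3 / T^2 \<le> (\<Sum>k=1..N. p k * f k^2) + l * (\<Sum>k=1..N. f k^2)"
    by (simp add: algebra_simps sum.distrib sum_distrib_left)
  have "\<upsilon> * c * (\<Sum>k=1..N. y k) \<le> \<upsilon> * c * T" using h2 uc by (simp add: mult_left_mono)
  with h1 have e: "\<gamma> * (\<Sum>k=1..N. f k^2) \<le> \<upsilon> * c * T" by (simp add: sum_distrib_left)
  have "\<gamma> * SS N p l ^ 3 / T^2 \<le> \<gamma> * (\<Sum>k=1..N. p k * f k^2) + l * (\<gamma> * (\<Sum>k=1..N. f k^2))"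
    using mult_left_mono[OF hol2, of \<gamma>] g by (simp add: algebra_simps)
  also have "\<dots> \<le> \<gamma> * (\<Sum>k=1..N. p k * f k^2) + l * (\<upsilon> * c * T)"
    using e l by (simp add: mult_left_mono)
  finally show ?thesis unfolding P3_objective_def
    by (simp add: sum_distrib_left algebra_simps)
qed

lemma feas_pt:
  assumes pp: "\<forall>k\<in>{1..N}. p k > (0::real)" and N: "N \<ge> 1" and g: "\<gamma> > 0"
    and T: "T > 0" and l: "l \<ge> 0"
    and E: "\<gamma> * SS N p l ^ 2 * RR N p l \<le> \<upsilon> * c * T^3"
  shows "\<exists>f y. P3_feasible \<gamma> \<upsilon> c T N f y \<and>
           P3_objective \<gamma> N p f = \<gamma> / T^2 * SS N p l ^ 2 * QQ N p l"
proof -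
  define S where "S = SS N p l"
  have S: "S > 0" unfolding S_def using SS_pos N pp l by blast
  define r where "r k = (p k + l) powr (1/3)" for k
  have r: "r k > 0" if "k \<in> {1..N}" for k using ppl[OF pp l that] unfolding r_def by auto
  define f where "f k = S / (T * r k)" for k
  define y where "y k = T * r k / S" for k
  have sy: "(\<Sum>k=1..N. y k) = T"
    unfolding y_def using S by (simp add: sum_divide_distrib[symmetric] sum_distrib_left[symmetric] S_def SS_def r_def)
  have sf: "(\<Sum>k=1..N. \<gamma> * (f k)^2) = \<gamma> * S^2 * RR N p l / T^2"
  proof -
    have "(\<Sum>k=1..N. \<gamma> * (f k)^2) = (\<Sum>k=1..N. \<gamma> * S^2 / T^2 * (p k + l) powr (-2/3))"
    proof (rule sum.cong)
      fix k assume k: "k \<in> {1..N}"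
      show "\<gamma> * (f k)^2 = \<gamma> * S^2 / T^2 * (p k + l) powr (-2/3)"
        using powr_m23[OF ppl[OF pp l k]] by (simp add: f_def r_def power_divide power_mult_distrib)
    qed simp
    then show ?thesis by (simp add: RR_def sum_distrib_left sum_divide_distrib)
  qed
  have feas: "P3_feasible \<gamma> \<upsilon> c T N f y"
    unfolding P3_feasible_def
  proof (intro conjI ballI)
    show "(\<Sum>k=1..N. \<gamma> * (f k)^2) \<le> \<upsilon> * c * (\<Sum>k=1..N. y k)"
    proof -
      have "T^2 * (\<Sum>k=1..N. \<gamma> * (f k)^2) = \<gamma> * S^2 * RR N p l" using sf T by simp
      also have "\<dots> \<le> T^2 * (\<upsilon> * c * T)" using E by (simp add: S_def power3_eq_cube power2_eq_square algebra_simps)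
      finally have "(\<Sum>k=1..N. \<gamma> * (f k)^2) \<le> \<upsilon> * c * T" using T by simp
      then show ?thesis using sy by simp
    qed
    show "(\<Sum>k=1..N. y k) \<le> T" using sy by simp
    fix k assume k: "k \<in> {1..N}"
    show "f k > 0" using r[OF k] S T by (simp add: f_def)
    show "1 / f k - y k \<le> 0" using r[OF k] S T by (simp add: f_def y_def)
  qed
  have "P3_objective \<gamma> N p f = (\<Sum>k=1..N. \<gamma> * S^2 / T^2 * (p k * (p k + l) powr (-2/3)))"
    unfolding P3_objective_def
  proof (rule sum.cong)
    fix k assume k: "k \<in> {1..N}"
    show "\<gamma> * p k * (f k)^2 = \<gamma> * S^2 / T^2 * (p k * (p k + l) powr (-2/3))"
      using powr_m23[OF ppl[OF pp l k]] by (simp add: f_def r_def power_divide power_mult_distrib)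
  qed simp
  also have "\<dots> = \<gamma> / T^2 * SS N p l ^ 2 * QQ N p l"
    by (simp add: QQ_def S_def sum_distrib_left sum_divide_distrib)
  finally show ?thesis using feas by blast
qed

lemma SS_ident:
  assumes pp: "\<forall>k\<in>{1..N}. p k > (0::real)" and l: "l \<ge> 0"
  shows "SS N p l ^ 3 - l * SS N p l ^ 2 * RR N p l = SS N p l ^ 2 * QQ N p l"
proof -
  have "SS N p l - l * RR N p l = QQ N p l"
  proof -
    have "SS N p l - l * RR N p l = (\<Sum>k=1..N. (p k + l) powr (1/3) - l * (p k + l) powr (-2/3))"
      by (simp add: SS_def RR_def sum_subtractf sum_distrib_left)
    also have "\<dots> = QQ N p l" unfolding QQ_def
    proof (rule sum.cong)
      fix k assume k: "k \<in> {1..N}"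
      define r where "r = (p k + l) powr (1/3)"
      have r: "r > 0" "r^3 = p k + l" using ppl[OF pp l k] powr_cube[of "p k + l"] by (auto simp: r_def)
      have m: "(p k + l) powr (-2/3) = 1 / r^2" using powr_m23[OF ppl[OF pp l k]] by (simp add: r_def)
      show "(p k + l) powr (1/3) - l * (p k + l) powr (-2/3) = p k * (p k + l) powr (-2/3)"
        unfolding m r_def[symmetric] using r by (simp add: field_simps power2_eq_square power3_eq_cube)
    qed simp
    finally show ?thesis .
  qed
  then show ?thesis by (simp add: power2_eq_square power3_eq_cube algebra_simps)
qed

lemma obj_nonneg: "\<forall>k\<in>{1..N}. p k > (0::real) \<Longrightarrow> \<gamma> > 0 \<Longrightarrow> P3_objective \<gamma> N p f \<ge> 0"
  unfolding P3_objective_def by (rule sum_nonneg) (simp add: less_imp_le)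

lemma value_le:
  assumes "\<forall>k\<in>{1..N}. p k > (0::real)" "\<gamma> > 0" "P3_feasible \<gamma> \<upsilon> c T N f y"
  shows "P3_value \<gamma> \<upsilon> c T N p \<le> P3_objective \<gamma> N p f"
  unfolding P3_value_def
  by (rule cInf_lower) (use assms obj_nonneg in \<open>auto intro!: bdd_belowI[where m=0]\<close>)

lemma value_ge:
  assumes "\<exists>f y. P3_feasible \<gamma> \<upsilon> c T N f y"
    "\<And>f y. P3_feasible \<gamma> \<upsilon> c T N f y \<Longrightarrow> L \<le> P3_objective \<gamma> N p f"
  shows "L \<le> P3_value \<gamma> \<upsilon> c T N p"
  unfolding P3_value_def
  by (rule cInf_greatest) (use assms in auto)


lemma value_exact:
  assumes pp: "\<forall>k\<in>{1..N}. p k > (0::real)" and N: "N \<ge> 1" and g: "\<gamma> > 0"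
    and uc: "\<upsilon> * c \<ge> 0" and T: "T > 0" and l: "l \<ge> 0"
    and E: "\<gamma> * SS N p l ^ 2 * RR N p l = \<upsilon> * c * T^3"
  shows "P3_value \<gamma> \<upsilon> c T N p = \<gamma> / T^2 * SS N p l ^ 2 * QQ N p l"
    and "P3_value \<gamma> \<upsilon> c T N p = \<gamma> * SS N p l ^ 3 / T^2 - l * \<upsilon> * c * T"
proof -
  have id: "\<gamma> * SS N p l ^ 3 / T^2 - l * \<upsilon> * c * T = \<gamma> / T^2 * SS N p l ^ 2 * QQ N p l"
  proof -
    have "l * \<upsilon> * c * T = l * \<gamma> * SS N p l ^ 2 * RR N p l / T^2"
      using E T by (simp add: field_simps power3_eq_cube power2_eq_square)
    then have "\<gamma> * SS N p l ^ 3 / T^2 - l * \<upsilon> * c * T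
        = \<gamma> / T^2 * (SS N p l ^ 3 - l * SS N p l ^ 2 * RR N p l)"
      by (simp add: algebra_simps)
    then show ?thesis using SS_ident[OF pp l] by simp
  qed
  obtain f y where F: "P3_feasible \<gamma> \<upsilon> c T N f y"
    and O: "P3_objective \<gamma> N p f = \<gamma> / T^2 * SS N p l ^ 2 * QQ N p l"
    using feas_pt[OF pp N g T l, of \<upsilon> c] E by auto
  have le: "P3_value \<gamma> \<upsilon> c T N p \<le> \<gamma> / T^2 * SS N p l ^ 2 * QQ N p l"
    using value_le[OF pp g F] O by simp
  have ge: "\<gamma> * SS N p l ^ 3 / T^2 - l * \<upsilon> * c * T \<le> P3_value \<gamma> \<upsilon> c T N p"
    by (rule value_ge) (use F LB_feas[OF pp N g uc T l] in auto)
  show "P3_value \<gamma> \<upsilon> c T N p = \<gamma> / T^2 * SS N p l ^ 2 * QQ N p l"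
    using le ge id by linarith
  then show "P3_value \<gamma> \<upsilon> c T N p = \<gamma> * SS N p l ^ 3 / T^2 - l * \<upsilon> * c * T"
    using id by linarith
qed

lemma value_lb:
  assumes pp: "\<forall>k\<in>{1..N}. p k > (0::real)" and N: "N \<ge> 1" and g: "\<gamma> > 0"
    and uc: "\<upsilon> * c \<ge> 0" and T: "T > 0" and l: "l \<ge> 0"
    and ne: "\<exists>f y. P3_feasible \<gamma> \<upsilon> c T N f y"
  shows "\<gamma> * SS N p l ^ 3 / T^2 - l * \<upsilon> * c * T \<le> P3_value \<gamma> \<upsilon> c T N p"
  by (rule value_ge) (use ne LB_feas[OF pp N g uc T l] in auto)

lemma feas_uniform:
  assumes N: "N \<ge> 1" and T: "T > 0" and E: "\<gamma> * real N ^ 3 \<le> \<upsilon> * c * T^3"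
  shows "P3_feasible \<gamma> \<upsilon> c T N (\<lambda>k. real N / T) (\<lambda>k. T / real N)"
    and "P3_objective \<gamma> N p (\<lambda>k. real N / T) = \<gamma> * real N ^ 2 / T^2 * (\<Sum>k=1..N. p k)"
proof -
  have Np: "real N > 0" using N by simp
  show "P3_feasible \<gamma> \<upsilon> c T N (\<lambda>k. real N / T) (\<lambda>k. T / real N)"
    unfolding P3_feasible_def
  proof (intro conjI ballI)
    have "(\<Sum>k=1..N. \<gamma> * (real N / T)^2) = \<gamma> * real N ^ 3 / T^2"
      by (simp add: power2_eq_square power3_eq_cube)
    also have "\<dots> \<le> \<upsilon> * c * T" using E T by (simp add: field_simps power2_eq_square power3_eq_cube)
    also have "\<dots> = \<upsilon> * c * (\<Sum>k=1..N. T / real N)" using Np by simp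
    finally show "(\<Sum>k=1..N. \<gamma> * (real N / T)^2) \<le> \<upsilon> * c * (\<Sum>k=1..N. T / real N)" .
    show "(\<Sum>k=1..N. T / real N) \<le> T" using Np by simp
  qed (use Np T in auto)
  show "P3_objective \<gamma> N p (\<lambda>k. real N / T) = \<gamma> * real N ^ 2 / T^2 * (\<Sum>k=1..N. p k)"
    unfolding P3_objective_def by (simp add: sum_distrib_left sum_distrib_right power_divide field_simps sum_divide_distrib)
qed

lemma uniform_forced:
  assumes N: "N \<ge> 1" and T: "T > 0" and g: "\<gamma> > 0"
    and F: "P3_feasible \<gamma> \<upsilon> c T N f y" and E: "\<upsilon> * c * T^3 \<le> \<gamma> * real N ^ 3" and uc: "\<upsilon> * c \<ge> 0"
  shows "\<forall>k\<in>{1..N}. f k = real N / T"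
proof -
  from F have h1: "(\<Sum>k=1..N. \<gamma> * (f k)^2) \<le> \<upsilon> * c * (\<Sum>k=1..N. y k)"
    and h2: "(\<Sum>k=1..N. y k) \<le> T" and h3: "\<forall>k\<in>{1..N}. f k > 0 \<and> 1 / f k - y k \<le> 0"
    unfolding P3_feasible_def by auto
  have "(\<Sum>k=1..N. 1 / f k) \<le> (\<Sum>k=1..N. y k)" by (rule sum_mono) (use h3 in auto)
  with h2 have s1: "(\<Sum>k=1..N. 1 / f k) \<le> T" by linarith
  have "\<upsilon> * c * (\<Sum>k=1..N. y k) \<le> \<upsilon> * c * T" using h2 uc by (simp add: mult_left_mono)
  with h1 have e: "\<gamma> * (\<Sum>k=1..N. f k^2) \<le> \<upsilon> * c * T" by (simp add: sum_distrib_left)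
  have "\<upsilon> * c * T \<le> \<gamma> * real N ^ 3 / T^2" using E T by (simp add: field_simps power2_eq_square power3_eq_cube)
  with e g have s2: "(\<Sum>k=1..N. f k^2) \<le> real N ^ 3 / T^2"
    by (smt (verit, ccfv_SIG) divide_le_eq_1_pos mult_le_cancel_left_pos times_divide_eq_right)
  define m where "m = real N / T"
  have m: "m > 0" using N T by (simp add: m_def)
  define d where "d k = f k^2 + 2*m^3/f k - 3*m^2" for k
  have dn: "\<forall>k\<in>{1..N}. d k \<ge> 0" using cube_amgm[of _ 1 m] h3 m by (auto simp: d_def)
  have "(\<Sum>k=1..N. d k) = (\<Sum>k=1..N. f k^2) + 2*m^3*(\<Sum>k=1..N. 1/f k) - 3*m^2*real N"
    by (simp add: d_def sum.distrib sum_subtractf sum_distrib_left)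
  also have "\<dots> \<le> real N ^ 3 / T^2 + 2*m^3*T - 3*m^2*real N"
    using s1 s2 m by (simp add: mult_left_mono add_mono)
  also have "\<dots> = 0" using T by (simp add: m_def field_simps power2_eq_square power3_eq_cube)
  finally have "(\<Sum>k=1..N. d k) \<le> 0" .
  then have "(\<Sum>k=1..N. d k) = 0" using dn by (meson antisym sum_nonneg)
  then have "\<forall>k\<in>{1..N}. d k = 0" using dn sum_nonneg_eq_0_iff[of "{1..N}" d] by simp
  then show ?thesis using cube_eq m h3 by (auto simp: d_def m_def)
qed


lemma G_bound:
  assumes pp: "\<forall>k\<in>{1..N}. p k > (0::real)" and p1: "\<forall>k\<in>{1..N}. p k \<le> 1"
    and N: "N \<ge> 1" and l: "l > 0"
  shows "SS N p l ^ 2 * RR N p l \<le> real N ^ 3 * ((1 + l) / l)^2"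
proof -
  define \<alpha> where "\<alpha> = (1 + l) powr (1/3)"
  define \<beta> where "\<beta> = l powr (1/3)"
  have ab: "\<alpha> > 0" "\<beta> > 0" "\<alpha>^3 = 1 + l" "\<beta>^3 = l"
    using l powr_cube[of l] powr_cube[of "1+l"] by (auto simp: \<alpha>_def \<beta>_def)
  have rk: "\<beta> \<le> (p k + l) powr (1/3) \<and> (p k + l) powr (1/3) \<le> \<alpha>" if k: "k \<in> {1..N}" for k
  proof -
    have "p k > 0" "p k \<le> 1" using pp p1 k by blast+
    then show ?thesis using l unfolding \<alpha>_def \<beta>_def by (auto intro!: powr_mono2)
  qed
  have S: "SS N p l \<le> real N * \<alpha>"
    unfolding SS_def using sum_bounded_above[of "{1..N}" "\<lambda>k. (p k + l) powr (1/3)" \<alpha>] rk by auto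
  have S0: "SS N p l \<ge> 0" using SS_pos[OF N pp, of l] l by simp
  have R: "RR N p l \<le> real N * (1 / \<beta>^2)"
  proof -
    have "RR N p l \<le> (\<Sum>k=1..N. 1 / \<beta>^2)" unfolding RR_def
    proof (rule sum_mono)
      fix k assume k: "k \<in> {1..N}"
      have pk: "p k + l > 0" using ppl[OF pp _ k] l by simp
      have "\<beta>^2 \<le> ((p k + l) powr (1/3))^2" using rk[OF k] ab by (simp add: power_mono)
      then show "(p k + l) powr (-2/3) \<le> 1 / \<beta>^2"
        unfolding powr_m23[OF pk] using ab by (simp add: frac_le)
    qed
    then show ?thesis by simp
  qed
  have R0: "RR N p l \<ge> 0" unfolding RR_def by (rule sum_nonneg) simp
  have "SS N p l ^ 2 * RR N p l \<le> (real N * \<alpha>)^2 * (real N * (1 / \<beta>^2))"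
    using S S0 R R0 by (intro mult_mono power_mono) auto
  also have "\<dots> = real N ^ 3 * (\<alpha> / \<beta>)^2" using ab by (simp add: field_simps power2_eq_square power3_eq_cube)
  also have "\<dots> \<le> real N ^ 3 * ((1 + l) / l)^2"
  proof -
    define z where "z = \<alpha> / \<beta>"
    have z3: "z^3 = (1 + l) / l" using ab by (simp add: z_def power_divide)
    have zp: "z > 0" using ab by (simp add: z_def)
    have z31: "z^3 \<ge> 1" using z3 l by simp
    have z1: "z \<ge> 1"
    proof (rule ccontr)
      assume "\<not> z \<ge> 1"
      then have "z^3 < 1^3" using zp by (intro power_strict_mono) auto
      then show False using z31 by simp
    qed
    have "1 \<le> z^2" using z1 by (rule one_le_power)
    then have "z * 1 \<le> z * z^2" using zp by (intro mult_left_mono) auto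
    then have "z \<le> z^3" by (simp add: power2_eq_square power3_eq_cube)
    then have "z^2 \<le> ((1+l)/l)^2" using zp z3 by (simp add: power_mono)
    then show ?thesis by (simp add: z_def mult_left_mono)
  qed
  finally show ?thesis .
qed

lemma exists_lam:
  assumes pp: "\<forall>k\<in>{1..N}. p k > (0::real)" and p1: "\<forall>k\<in>{1..N}. p k \<le> 1"
    and N: "N \<ge> 1" and t1: "real N ^ 3 < t" and t2: "t < SS N p 0 ^ 2 * RR N p 0"
  shows "\<exists>l>0. SS N p l ^ 2 * RR N p l = t"
proof -
  have Np: "real N ^ 3 > 0" using N by simp
  define \<epsilon> where "\<epsilon> = t / real N ^ 3 - 1"
  have \<epsilon>: "\<epsilon> > 0" using t1 Np by (simp add: \<epsilon>_def field_simps)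
  define \<delta> where "\<delta> = min 1 (\<epsilon>/4)"
  have \<delta>: "\<delta> > 0" "\<delta> \<le> 1" "\<delta> \<le> \<epsilon>/4" using \<epsilon> by (auto simp: \<delta>_def)
  define L where "L = 1 / \<delta>"
  have L: "L > 0" using \<delta> by (simp add: L_def)
  have "(1 + L) / L = 1 + \<delta>" using \<delta> by (simp add: L_def field_simps)
  moreover have "(1 + \<delta>)^2 < 1 + \<epsilon>"
  proof -
    have "(1 + \<delta>)^2 = 1 + 2*\<delta> + \<delta>*\<delta>" by (simp add: power2_eq_square algebra_simps)
    also have "\<dots> \<le> 1 + 3*\<delta>" using \<delta> by (simp add: mult_left_le)
    also have "\<dots> < 1 + \<epsilon>" using \<delta> \<epsilon> by linarith
    finally show ?thesis .
  qed
  ultimately have "SS N p L ^ 2 * RR N p L < real N ^ 3 * (1 + \<epsilon>)"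
    using G_bound[OF pp p1 N L] Np by (smt (verit) mult_strict_left_mono)
  also have "\<dots> = t" using Np by (simp add: \<epsilon>_def field_simps)
  finally have GL: "SS N p L ^ 2 * RR N p L < t" .
  have c1: "continuous_on {0..L} (\<lambda>l. (p k + l) powr e)" if k: "k \<in> {1..N}" for k e
  proof (rule continuous_on_powr')
    show "\<forall>x\<in>{0..L}. 0 \<le> p k + x \<and> (p k + x = 0 \<longrightarrow> 0 < e)"
      using ppl[OF pp _ k] by force
  qed (auto intro!: continuous_on_add continuous_on_const continuous_on_id)
  have cont: "continuous_on {0..L} (\<lambda>l. SS N p l ^ 2 * RR N p l)"
    unfolding SS_def RR_def
    by (intro continuous_intros c1) auto
  obtain x where x: "0 \<le> x" "x \<le> L" "SS N p x ^ 2 * RR N p x = t"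
    using IVT2'[of "\<lambda>l. SS N p l ^ 2 * RR N p l" L t 0] GL t2 L cont by auto
  have "x \<noteq> 0" using x t2 by auto
  then show ?thesis using x by (intro exI[of _ x]) auto
qed


lemma pp23: "(x::real) > 0 \<Longrightarrow> x * x powr (-2/3) = x powr (1/3)"
proof -
  assume x: "x > 0"
  have "x powr (1/3) = x powr (1 + (-2/3))" by simp
  also have "\<dots> = x powr 1 * x powr (-2/3)" by (rule powr_add)
  finally show ?thesis using x by simp
qed

theorem corollary1:
  fixes N :: nat and \<gamma> \<upsilon> Pb h T :: real and p :: "nat \<Rightarrow> real"
  assumes N2: "N \<ge> 2"
    and g: "\<gamma> > 0" and u: "0 < \<upsilon>" "\<upsilon> \<le> 1"
    and Pb: "Pb > 0" and h: "h > 0" and T: "T > 0"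
    and pdec: "\<And>i j. 1 \<le> i \<Longrightarrow> i < j \<Longrightarrow> j \<le> N \<Longrightarrow> p j < p i"
    and pN: "p N > 0" and p1: "p 1 \<le> 1"
  defines "a \<equiv> \<gamma> * real N ^ 3 / (\<upsilon> * T ^ 3)"
    and "a' \<equiv> \<gamma> / (\<upsilon> * T ^ 3) * (\<Sum>k=1..N. p k powr (1/3)) ^ 2
                 * (\<Sum>k=1..N. p k powr (-2/3))"
    and "E \<equiv> (\<lambda>c. P3_value \<gamma> \<upsilon> c T N p)"
  shows
    "(a < Pb * h \<and> Pb * h < a' \<longrightarrow>
        (\<exists>lam>0. (\<Sum>k=1..N. (p k + lam) powr (1/3)) ^ 2 * (\<Sum>k=1..N. (p k + lam) powr (-2/3))
                 = \<upsilon> * Pb * h * T ^ 3 / \<gamma>) \<and>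
        (\<forall>lam>0. (\<Sum>k=1..N. (p k + lam) powr (1/3)) ^ 2 * (\<Sum>k=1..N. (p k + lam) powr (-2/3))
                 = \<upsilon> * Pb * h * T ^ 3 / \<gamma> \<longrightarrow>
            E (Pb * h) = \<gamma> / T ^ 2 * (\<Sum>k=1..N. (p k + lam) powr (1/3)) ^ 2
                          * (\<Sum>k=1..N. p k * (p k + lam) powr (-2/3)))) \<and>
     (Pb * h = a \<longrightarrow> E (Pb * h) = \<gamma> * real N ^ 2 / T ^ 2 * (\<Sum>k=1..N. p k)) \<and>
     (\<forall>c1 c2. a \<le> c1 \<longrightarrow> c1 < c2 \<longrightarrow> c2 < a' \<longrightarrow> E c2 < E c1) \<and>
     (a \<le> Pb * h \<and> Pb * h < a' \<longrightarrow>
        \<gamma> / T ^ 2 * (\<Sum>k=1..N. p k powr (1/3)) ^ 3 < E (Pb * h) \<and>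
        E (Pb * h) \<le> \<gamma> * real N ^ 2 / T ^ 2 * (\<Sum>k=1..N. p k)) \<and>
     (Pb * h \<ge> a' \<longrightarrow> E (Pb * h) = \<gamma> / T ^ 2 * (\<Sum>k=1..N. p k powr (1/3)) ^ 3)"
proof -
  have N: "N \<ge> 1" using N2 by simp
  have pp: "\<forall>k\<in>{1..N}. p k > 0"
  proof
    fix k assume k: "k \<in> {1..N}"
    show "p k > 0"
    proof (cases "k = N")
      case True then show ?thesis using pN by simp
    next
      case False then have "p N < p k" using k by (intro pdec) auto
      then show ?thesis using pN by simp
    qed
  qed
  have ple: "\<forall>k\<in>{1..N}. p k \<le> 1"
  proof
    fix k assume k: "k \<in> {1..N}"
    show "p k \<le> 1"
    proof (cases "k = 1")
      case True then show ?thesis using p1 by simp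
    next
      case False then have "p k < p 1" using k by (intro pdec) auto
      then show ?thesis using p1 by simp
    qed
  qed
  have uT: "\<upsilon> * T^3 > 0" using u T by simp
  have S0: "SS N p 0 = (\<Sum>k=1..N. p k powr (1/3))" by (simp add: SS_def)
  have R0: "RR N p 0 = (\<Sum>k=1..N. p k powr (-2/3))" by (simp add: RR_def)
  have Q0: "QQ N p 0 = SS N p 0" unfolding QQ_def SS_def
    by (rule sum.cong) (use pp pp23 in auto)
  define X0 where "X0 = SS N p 0 ^ 2 * RR N p 0"
  have a'X: "a' = \<gamma> / (\<upsilon> * T^3) * X0" by (simp add: a'_def X0_def S0 R0)
  have ca: "a \<le> c \<longleftrightarrow> \<gamma> * real N ^ 3 \<le> \<upsilon> * c * T^3" for c
    using uT by (simp add: a_def pos_divide_le_eq algebra_simps)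
  have ca2: "a < c \<longleftrightarrow> real N ^ 3 < \<upsilon> * c * T^3 / \<gamma>" for c
    using uT g by (simp add: a_def pos_divide_less_eq pos_less_divide_eq algebra_simps)
  have ca3: "c < a' \<longleftrightarrow> \<upsilon> * c * T^3 / \<gamma> < X0" for c
    using uT g by (simp add: a'X pos_less_divide_eq pos_divide_less_eq algebra_simps)
  have ca4: "a' \<le> c \<longleftrightarrow> \<gamma> * X0 \<le> \<upsilon> * c * T^3" for c
    using uT by (simp add: a'X pos_divide_le_eq algebra_simps)
  have apos: "a > 0" using g uT N by (simp add: a_def)
  have ucnn: "\<upsilon> * c \<ge> 0" if "a \<le> c" for c using that apos u by simp
  have nonempty: "\<exists>f y. P3_feasible \<gamma> \<upsilon> c T N f y" if "a \<le> c" for c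
    using feas_uniform(1)[OF N T, of \<gamma> \<upsilon> c] that ca by blast
  have lamex: "\<exists>l>0. SS N p l ^ 2 * RR N p l = \<upsilon> * c * T^3 / \<gamma>" if "a < c" "c < a'" for c
    using exists_lam[OF pp ple N] that ca2 ca3 by (simp add: X0_def)
  have lamval: "E c = \<gamma> / T^2 * SS N p l ^ 2 * QQ N p l \<and> E c = \<gamma> * SS N p l ^ 3 / T^2 - l * \<upsilon> * c * T"
    if "a \<le> c" "l > 0" "SS N p l ^ 2 * RR N p l = \<upsilon> * c * T^3 / \<gamma>" for c l
  proof -
    have "\<gamma> * SS N p l ^ 2 * RR N p l = \<upsilon> * c * T^3" using that(3) g
      by (simp add: field_simps)
    then show ?thesis using value_exact[OF pp N g ucnn[OF that(1)] T, of l] that(2)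
      by (simp add: E_def)
  qed
  have mono: "\<forall>c1 c2. a \<le> c1 \<longrightarrow> c1 < c2 \<longrightarrow> c2 < a' \<longrightarrow> E c2 < E c1"
  proof (intro allI impI)
    fix c1 c2 assume c: "a \<le> c1" "c1 < c2" "c2 < a'"
    obtain l where l: "l > 0" "SS N p l ^ 2 * RR N p l = \<upsilon> * c2 * T^3 / \<gamma>"
      using lamex[of c2] c by auto
    have E2: "E c2 = \<gamma> * SS N p l ^ 3 / T^2 - l * \<upsilon> * c2 * T"
      using lamval[of c2 l] c l by auto
    have E1: "\<gamma> * SS N p l ^ 3 / T^2 - l * \<upsilon> * c1 * T \<le> E c1"
      unfolding E_def using value_lb[OF pp N g ucnn[OF c(1)] T, of l] nonempty[OF c(1)] l by simp
    have "l * \<upsilon> * c1 * T < l * \<upsilon> * c2 * T" using l u T c by simp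
    then show "E c2 < E c1" using E1 E2 by linarith
  qed
  define c where "c = Pb * h"
  have uc: "\<upsilon> * Pb * h = \<upsilon> * c" by (simp add: c_def)
  have P1: "a < c \<and> c < a' \<longrightarrow>
        (\<exists>lam>0. SS N p lam ^ 2 * RR N p lam = \<upsilon> * c * T ^ 3 / \<gamma>) \<and>
        (\<forall>lam>0. SS N p lam ^ 2 * RR N p lam = \<upsilon> * c * T ^ 3 / \<gamma> \<longrightarrow>
            E c = \<gamma> / T ^ 2 * SS N p lam ^ 2 * QQ N p lam)"
    using lamex lamval by auto
  have upper: "E c \<le> \<gamma> * real N ^ 2 / T ^ 2 * (\<Sum>k=1..N. p k)" if "a \<le> c"
    using value_le[OF pp g feas_uniform(1)[OF N T, of \<gamma> \<upsilon> c]] feas_uniform(2)[OF N T, of \<gamma> \<upsilon> c p]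
      that ca by (simp add: E_def)
  have P2: "c = a \<longrightarrow> E c = \<gamma> * real N ^ 2 / T ^ 2 * (\<Sum>k=1..N. p k)"
  proof
    assume ce: "c = a"
    have "\<gamma> * real N ^ 2 / T ^ 2 * (\<Sum>k=1..N. p k) \<le> E c"
      unfolding E_def
    proof (rule value_ge)
      show "\<exists>f y. P3_feasible \<gamma> \<upsilon> c T N f y" using nonempty ce by simp
      fix f y assume F: "P3_feasible \<gamma> \<upsilon> c T N f y"
      have "\<upsilon> * c * T^3 \<le> \<gamma> * real N ^ 3" using ce uT g by (simp add: a_def)
      then have "\<forall>k\<in>{1..N}. f k = real N / T"
        using uniform_forced[OF N T g F] ucnn[of c] ce by simp
      then have "P3_objective \<gamma> N p f = P3_objective \<gamma> N p (\<lambda>k. real N / T)"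
        unfolding P3_objective_def by (intro sum.cong) auto
      then show "\<gamma> * real N ^ 2 / T ^ 2 * (\<Sum>k=1..N. p k) \<le> P3_objective \<gamma> N p f"
        using feas_uniform(2)[OF N T, of \<gamma> \<upsilon> c p] ca[of c] ce by simp
    qed
    then show "E c = \<gamma> * real N ^ 2 / T ^ 2 * (\<Sum>k=1..N. p k)" using upper ce by fastforce
  qed
  have lb0: "\<gamma> * SS N p 0 ^ 3 / T^2 \<le> E c'" if "a \<le> c'" for c'
    using value_lb[OF pp N g ucnn[OF that] T, of 0] nonempty[OF that] by (simp add: E_def)
  have P4: "a \<le> c \<and> c < a' \<longrightarrow> \<gamma> / T ^ 2 * SS N p 0 ^ 3 < E c \<and>
        E c \<le> \<gamma> * real N ^ 2 / T ^ 2 * (\<Sum>k=1..N. p k)"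
  proof
    assume c: "a \<le> c \<and> c < a'"
    define c' where "c' = (c + a') / 2"
    have "E c' < E c" using mono c by (simp add: c'_def)
    moreover have "\<gamma> * SS N p 0 ^ 3 / T^2 \<le> E c'" using lb0 c by (simp add: c'_def)
    ultimately show "\<gamma> / T ^ 2 * SS N p 0 ^ 3 < E c \<and>
        E c \<le> \<gamma> * real N ^ 2 / T ^ 2 * (\<Sum>k=1..N. p k)" using upper c by simp
  qed
  have P5: "c \<ge> a' \<longrightarrow> E c = \<gamma> / T ^ 2 * SS N p 0 ^ 3"
  proof
    assume c: "c \<ge> a'"
    have "\<gamma> * SS N p 0 ^ 2 * RR N p 0 \<le> \<upsilon> * c * T^3" using c ca4 by (simp add: X0_def mult.assoc)
    then obtain f y where F: "P3_feasible \<gamma> \<upsilon> c T N f y"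
      and O: "P3_objective \<gamma> N p f = \<gamma> / T^2 * SS N p 0 ^ 2 * QQ N p 0"
      using feas_pt[OF pp N g T, of 0 \<upsilon> c] by auto
    have cp: "\<upsilon> * c \<ge> 0" using u Pb h by (simp add: c_def)
    have "E c \<le> \<gamma> / T^2 * SS N p 0 ^ 3"
      using value_le[OF pp g F] O Q0 by (simp add: E_def power3_eq_cube power2_eq_square)
    moreover have "\<gamma> * SS N p 0 ^ 3 / T^2 \<le> E c"
      using value_lb[OF pp N g cp T, of 0] F by (auto simp: E_def)
    ultimately show "E c = \<gamma> / T ^ 2 * SS N p 0 ^ 3" by simp
  qed
  show ?thesis
    using P1 P2 mono P4 P5 unfolding c_def uc SS_def RR_def QQ_def by simp
qed

end
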